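(* Let $N > n > m$ be positive integers and let $p(w) = c_N w^N + \sum_{k=m}^n c_k w^k + c_0$ be a polynomial with complex coefficients, where $c_0 \neq 0$ and $c_N \neq 0$. Define \[ R_1 := \max\left\{ 1, \frac{1}{|c_N|}\left(|c_0| + \sum_{k=m}^{n} |c_k|\right)\right\}, \qquad R_0 := \min\left\{ 1, \frac{|c_0|}{|c_N| + \sum_{k=m}^n |c_k|}\right\}. \] Then every root $w \in \mathbb{C}$ of $p$ satisfies $R_0^{1/m} \leq |w| \leq R_1^{1/(N-n)}$. *)

theory Defs
  imports Complex_Main
begin

end

theory Submission
  imports Defs
begin

lemma root_pow_powr:
  fixes r :: real assumes "0 \<le> r" "0 < k"
  shows "(r ^ k) powr (1 / real k) = r"
proof (cases "r = 0")
  case True then show ?thesis using assms by simp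
next
  case False
  then have "r > 0" using assms by simp
  then have "(r ^ k) powr (1 / real k) = (r powr real k) powr (1 / real k)"
    by (simp add: powr_realpow)
  also have "\<dots> = r" using assms by (simp add: powr_powr)
  finally show ?thesis .
qed

theorem proposition2p1:
  fixes N n m :: nat and c :: "nat \<Rightarrow> complex" and w :: complex
  assumes "0 < m" and "m < n" and "n < N"
    and "c 0 \<noteq> 0" and "c N \<noteq> 0"
    and root: "c N * w ^ N + (\<Sum>k=m..n. c k * w ^ k) + c 0 = 0"
  defines "R1 \<equiv> max 1 ((cmod (c 0) + (\<Sum>k=m..n. cmod (c k))) / cmod (c N))"
    and "R0 \<equiv> min 1 (cmod (c 0) / (cmod (c N) + (\<Sum>k=m..n. cmod (c k))))"
  shows "R0 powr (1 / real m) \<le> cmod w \<and> cmod w \<le> R1 powr (1 / real (N - n))"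
proof
  define r where "r = cmod w"
  define S where "S = (\<Sum>k=m..n. cmod (c k))"
  have r0: "r \<ge> 0" unfolding r_def by simp
  have S0: "S \<ge> 0" unfolding S_def by (simp add: sum_nonneg)
  have cN: "cmod (c N) > 0" "cmod (c 0) > 0" using assms by auto
  have nrm: "norm (\<Sum>k=m..n. c k * w ^ k) \<le> (\<Sum>k=m..n. cmod (c k) * r ^ k)"
    unfolding r_def by (rule order_trans[OF norm_sum]) (simp add: norm_mult norm_power)
  show "R0 powr (1 / real m) \<le> cmod w"
  proof (cases "r \<ge> 1")
    case True
    have "R0 \<le> 1" unfolding R0_def by simp
    moreover have "R0 \<ge> 0" unfolding R0_def using cN S0 by (simp add: S_def[symmetric])
    ultimately have "R0 powr (1 / real m) \<le> 1 powr (1 / real m)"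
      by (intro powr_mono2) auto
    then show ?thesis using True r_def by simp
  next
    case False
    have "c 0 = - (c N * w ^ N + (\<Sum>k=m..n. c k * w ^ k))" using root
      by (metis add.commute add_eq_0_iff)
    then have "cmod (c 0) \<le> cmod (c N * w ^ N) + norm (\<Sum>k=m..n. c k * w ^ k)"
      by (metis norm_minus_cancel norm_triangle_ineq)
    also have "\<dots> \<le> cmod (c N) * r ^ N + (\<Sum>k=m..n. cmod (c k) * r ^ k)"
      using nrm by (simp add: norm_mult norm_power r_def)
    also have "\<dots> \<le> cmod (c N) * r ^ m + (\<Sum>k=m..n. cmod (c k) * r ^ m)"
    proof (rule add_mono)
      show "cmod (c N) * r ^ N \<le> cmod (c N) * r ^ m" 
      proof (rule mult_left_mono)
        show "r ^ N \<le> r ^ m" using False r0 \<open>m < n\<close> \<open>n < N\<close>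
          by (intro power_decreasing) simp_all
      qed simp
    next
      show "(\<Sum>k=m..n. cmod (c k) * r ^ k) \<le> (\<Sum>k=m..n. cmod (c k) * r ^ m)"
      proof (rule sum_mono)
      fix k assume "k \<in> {m..n}"
      then show "cmod (c k) * r ^ k \<le> cmod (c k) * r ^ m"
        using False r0 by (intro mult_left_mono power_decreasing) simp_all
      qed
    qed
    also have "\<dots> = (cmod (c N) + S) * r ^ m"
      unfolding S_def by (simp add: sum_distrib_right distrib_right)
    finally have "cmod (c 0) / (cmod (c N) + S) \<le> r ^ m"
      using pos_divide_le_eq[of "cmod (c N) + S" "cmod (c 0)" "r ^ m"] cN S0
      by (simp add: mult.commute)
    then have "R0 \<le> r ^ m" unfolding R0_def S_def by simp
    moreover have "R0 \<ge> 0" unfolding R0_def using cN S0 by (simp add: S_def[symmetric])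
    ultimately have "R0 powr (1 / real m) \<le> (r ^ m) powr (1 / real m)"
      by (intro powr_mono2) auto
    then show ?thesis using root_pow_powr[OF r0 assms(1)] r_def by simp
  qed
  show "cmod w \<le> R1 powr (1 / real (N - n))"
  proof (cases "r \<le> 1")
    case True
    have "R1 \<ge> 1" unfolding R1_def by simp
    then have "1 powr (1 / real (N - n)) \<le> R1 powr (1 / real (N - n))"
      using r0 by (intro powr_mono2) auto
    then show ?thesis using True r_def by simp
  next
    case False
    have "c N * w ^ N = - ((\<Sum>k=m..n. c k * w ^ k) + c 0)" 
      unfolding eq_neg_iff_add_eq_0 using root by (simp only: add.assoc)
    then have "cmod (c N * w ^ N) \<le> norm (\<Sum>k=m..n. c k * w ^ k) + cmod (c 0)"
      by (metis norm_minus_cancel norm_triangle_ineq)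
    then have "cmod (c N) * r ^ N \<le> (\<Sum>k=m..n. cmod (c k) * r ^ k) + cmod (c 0)"
      using nrm by (simp add: norm_mult norm_power r_def)
    also have "\<dots> \<le> (\<Sum>k=m..n. cmod (c k) * r ^ n) + cmod (c 0) * r ^ n"
    proof (intro add_mono sum_mono)
      fix k assume "k \<in> {m..n}"
      then show "cmod (c k) * r ^ k \<le> cmod (c k) * r ^ n"
        using False by (intro mult_left_mono power_increasing) simp_all
    next
      have "1 \<le> r ^ n" using False by (simp add: one_le_power)
      then show "cmod (c 0) \<le> cmod (c 0) * r ^ n"
        using mult_left_mono[of 1 "r ^ n" "cmod (c 0)"] by simp
    qed
    also have "\<dots> = (S + cmod (c 0)) * r ^ n"
      unfolding S_def by (simp add: sum_distrib_right distrib_right)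
    finally have A: "cmod (c N) * r ^ N \<le> (S + cmod (c 0)) * r ^ n" .
    have "r ^ N = r ^ n * r ^ (N - n)" using assms by (simp flip: power_add)
    with A have "cmod (c N) * r ^ (N - n) * r ^ n \<le> (S + cmod (c 0)) * r ^ n"
      by (simp add: ac_simps)
    then have "cmod (c N) * r ^ (N - n) \<le> S + cmod (c 0)"
      using False by (simp add: mult_le_cancel_right)
    then have "r ^ (N - n) \<le> (cmod (c 0) + S) / cmod (c N)"
      using cN by (simp add: le_divide_eq mult.commute add.commute)
    then have "r ^ (N - n) \<le> R1" unfolding R1_def S_def by simp
    then have "(r ^ (N - n)) powr (1 / real (N - n)) \<le> R1 powr (1 / real (N - n))"
      using r0 by (intro powr_mono2) auto
    then show ?thesis using root_pow_powr[OF r0, of "N - n"] assms r_def by simp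
  qed
qed

end
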